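(* Let $\lambda$ be a partition and $\pi$ an $R_\lambda$-permutation. If $\pi$ is $R_\lambda$-312-avoiding, then $\mathcal{D}_\lambda(\pi)=[Y_\lambda(\pi)]$, i.e. $\mathcal{D}_\lambda(\pi)=\{T\in\mathcal{T}_\lambda: T\le Y_\lambda(\pi)\}$.
   Context: Fix $n\ge1$; $[m]=\{1,\dots,m\}$. A partition is $\lambda=(\lambda_1\ge\cdots\ge\lambda_n\ge0)\in\mathbb{Z}^n$, with boxes $(j,i)$ (column $j$, row $i$), $1\le j\le\lambda_1$, $1\le i\le\zeta_j:=\#\{i:\lambda_i\ge j\}$; $R_\lambda:=\{\zeta_j:\zeta_j<n\}$ with elements $q_1<\dots<q_r$, $q_0:=0$, $q_{r+1}:=n$. An $R_\lambda$-permutation is a permutation $\pi$ of $[n]$ (one-line notation) strictly increasing on each index set $\{q_{h-1}+1,\dots,q_h\}$; it is $R_\lambda$-312-containing if there exist $h\in[r-1]$ and $1\le a\le q_h<b\le q_{h+1}<c\le n$ with $\pi_b<\pi_c<\pi_a$, and $R_\lambda$-312-avoiding otherwise. A tableau of shape $\lambda$ fills the boxes with values in $[n]$, strictly increasing down columns and weakly increasing along rows; $\mathcal{T}_\lambda$ is their set, ordered entrywise. The $\lambda$-key $Y_\lambda(\pi)$ is the tableau whose column $j$ consists of $\{\pi_1,\dots,\pi_{\zeta_j}\}$ in increasing order. Scanning tableau: the earliest weakly increasing subsequence (EWIS) of $x_1,x_2,\dots$ is $x_{i_1},x_{i_2},\dots$ with $i_1=1$ and $i_u$ the smallest index $>i_{u-1}$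 with $x_{i_u}\ge x_{i_{u-1}}$. For $T\in\mathcal{T}_\lambda$ and $l\in[\lambda_1]$, column $l$ of $S(T)$ is computed as follows: consider the boxes of $T$ in columns $l,\dots,\lambda_1$, initially unmarked; for $k=\zeta_l,\zeta_l-1,\dots,1$ in turn, form the sequence of lowest unmarked entries of columns $l,l+1,\dots$ (left to right, over columns still having unmarked boxes), take its EWIS, mark the contributing boxes, and set the entry of $S(T)$ at column $l$, row $k$ to the last term of the EWIS. The set of Demazure tableaux is $\mathcal{D}_\lambda(\pi):=\{T\in\mathcal{T}_\lambda:S(T)\le Y_\lambda(\pi)\}$. *)

theory Defs
  imports Main
begin

text \<open>Partitions lam = (lam 1 \<ge> ... \<ge> lam n \<ge> 0), given as a function on indices 1..n.
  Boxes are (j,i): column j, row i.\<close>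

definition partition :: "nat \<Rightarrow> (nat \<Rightarrow> nat) \<Rightarrow> bool" where
  "partition n lam \<longleftrightarrow> (\<forall>i. 1 \<le> i \<and> i < n \<longrightarrow> lam (i+1) \<le> lam i)"

definition zeta :: "nat \<Rightarrow> (nat \<Rightarrow> nat) \<Rightarrow> nat \<Rightarrow> nat" where
  "zeta n lam j = card {i \<in> {1..n}. j \<le> lam i}"

definition in_shape :: "nat \<Rightarrow> (nat \<Rightarrow> nat) \<Rightarrow> nat \<Rightarrow> nat \<Rightarrow> bool" where
  "in_shape n lam j i \<longleftrightarrow> 1 \<le> j \<and> j \<le> lam 1 \<and> 1 \<le> i \<and> i \<le> zeta n lam j"

definition Rset :: "nat \<Rightarrow> (nat \<Rightarrow> nat) \<Rightarrow> nat set" where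
  "Rset n lam = {zeta n lam j | j. 1 \<le> j \<and> j \<le> lam 1 \<and> zeta n lam j < n}"

definition qq :: "nat \<Rightarrow> (nat \<Rightarrow> nat) \<Rightarrow> nat \<Rightarrow> nat" where
  "qq n lam h = (if h = 0 then 0
     else if h \<le> card (Rset n lam) then sorted_list_of_set (Rset n lam) ! (h - 1) else n)"

definition R_perm :: "nat \<Rightarrow> (nat \<Rightarrow> nat) \<Rightarrow> (nat \<Rightarrow> nat) \<Rightarrow> bool" where
  "R_perm n lam \<pi> \<longleftrightarrow> bij_betw \<pi> {1..n} {1..n} \<and>
     (\<forall>h \<in> {1..card (Rset n lam) + 1}. \<forall>a b.
        qq n lam (h - 1) + 1 \<le> a \<and> a < b \<and> b \<le> qq n lam h \<longrightarrow> \<pi> a < \<pi> b)"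

definition R_312_containing :: "nat \<Rightarrow> (nat \<Rightarrow> nat) \<Rightarrow> (nat \<Rightarrow> nat) \<Rightarrow> bool" where
  "R_312_containing n lam \<pi> \<longleftrightarrow> (\<exists>h a b c. 1 \<le> h \<and> h \<le> card (Rset n lam) - 1 \<and>
     1 \<le> a \<and> a \<le> qq n lam h \<and> qq n lam h < b \<and> b \<le> qq n lam (h+1) \<and>
     qq n lam (h+1) < c \<and> c \<le> n \<and> \<pi> b < \<pi> c \<and> \<pi> c < \<pi> a)"

text \<open>Tableaux are functions column \<Rightarrow> row \<Rightarrow> entry, normalised to 0 outside the shape.\<close>
definition tableau :: "nat \<Rightarrow> (nat \<Rightarrow> nat) \<Rightarrow> (nat \<Rightarrow> nat \<Rightarrow> nat) \<Rightarrow> bool" where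
  "tableau n lam T \<longleftrightarrow>
     (\<forall>j i. in_shape n lam j i \<longrightarrow> 1 \<le> T j i \<and> T j i \<le> n) \<and>
     (\<forall>j i. in_shape n lam j i \<and> in_shape n lam j (i+1) \<longrightarrow> T j i < T j (i+1)) \<and>
     (\<forall>j i. in_shape n lam j i \<and> in_shape n lam (j+1) i \<longrightarrow> T j i \<le> T (j+1) i) \<and>
     (\<forall>j i. \<not> in_shape n lam j i \<longrightarrow> T j i = 0)"

definition Tabs :: "nat \<Rightarrow> (nat \<Rightarrow> nat) \<Rightarrow> (nat \<Rightarrow> nat \<Rightarrow> nat) set" where
  "Tabs n lam = {T. tableau n lam T}"

definition tab_le :: "nat \<Rightarrow> (nat \<Rightarrow> nat) \<Rightarrow> (nat \<Rightarrow> nat \<Rightarrow> nat) \<Rightarrow> (nat \<Rightarrow> nat \<Rightarrow> nat) \<Rightarrow> bool" where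
  "tab_le n lam T U \<longleftrightarrow> (\<forall>j i. in_shape n lam j i \<longrightarrow> T j i \<le> U j i)"

definition key :: "nat \<Rightarrow> (nat \<Rightarrow> nat) \<Rightarrow> (nat \<Rightarrow> nat) \<Rightarrow> nat \<Rightarrow> nat \<Rightarrow> nat" where
  "key n lam \<pi> j i = (if in_shape n lam j i
      then sorted_list_of_set (\<pi> ` {1..zeta n lam j}) ! (i - 1) else 0)"

fun ewis_from :: "nat \<Rightarrow> ('a \<times> nat) list \<Rightarrow> ('a \<times> nat) list" where
  "ewis_from cur [] = []"
| "ewis_from cur (x # xs) =
     (if cur \<le> snd x then x # ewis_from (snd x) xs else ewis_from cur xs)"

fun ewis :: "('a \<times> nat) list \<Rightarrow> ('a \<times> nat) list" where
  "ewis [] = []"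
| "ewis (x # xs) = x # ewis_from (snd x) xs"

text \<open>Scanning: the unmarked boxes of each column c form rows 1..m c, since marking
  always removes the lowest unmarked box.  The sequence lists (column, lowest unmarked
  entry) for the columns l..lam 1 still having unmarked boxes.\<close>
definition scan_seq :: "nat \<Rightarrow> (nat \<Rightarrow> nat) \<Rightarrow> (nat \<Rightarrow> nat \<Rightarrow> nat) \<Rightarrow> nat \<Rightarrow> (nat \<Rightarrow> nat)
    \<Rightarrow> (nat \<times> nat) list" where
  "scan_seq n lam T l m = map (\<lambda>c. (c, T c (m c))) (filter (\<lambda>c. 0 < m c) [l..<lam 1 + 1])"

definition scan_step :: "nat \<Rightarrow> (nat \<Rightarrow> nat) \<Rightarrow> (nat \<Rightarrow> nat \<Rightarrow> nat) \<Rightarrow> nat \<Rightarrow> (nat \<Rightarrow> nat)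
    \<Rightarrow> (nat \<Rightarrow> nat)" where
  "scan_step n lam T l m =
     (let E = ewis (scan_seq n lam T l m) in
      (\<lambda>c. if c \<in> fst ` set E then m c - 1 else m c))"

definition scan_state :: "nat \<Rightarrow> (nat \<Rightarrow> nat) \<Rightarrow> (nat \<Rightarrow> nat \<Rightarrow> nat) \<Rightarrow> nat \<Rightarrow> nat
    \<Rightarrow> (nat \<Rightarrow> nat)" where
  "scan_state n lam T l t = (scan_step n lam T l ^^ t)
     (\<lambda>c. if l \<le> c \<and> c \<le> lam 1 then zeta n lam c else 0)"

text \<open>Entry of S(T) at column l, row k: computed at step zeta l - k (k = zeta l, ..., 1).\<close>
definition scanning :: "nat \<Rightarrow> (nat \<Rightarrow> nat) \<Rightarrow> (nat \<Rightarrow> nat \<Rightarrow> nat) \<Rightarrow> nat \<Rightarrow> nat \<Rightarrow> nat" where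
  "scanning n lam T l k = (if in_shape n lam l k
     then snd (last (ewis (scan_seq n lam T l (scan_state n lam T l (zeta n lam l - k)))))
     else 0)"

definition Demazure :: "nat \<Rightarrow> (nat \<Rightarrow> nat) \<Rightarrow> (nat \<Rightarrow> nat) \<Rightarrow> (nat \<Rightarrow> nat \<Rightarrow> nat) set" where
  "Demazure n lam \<pi> = {T \<in> Tabs n lam. tab_le n lam (scanning n lam T) (key n lam \<pi>)}"

end

theory Submission
  imports Defs
begin


lemma SL_nth_in: "finite S \<Longrightarrow> j < card S \<Longrightarrow> sorted_list_of_set S ! j \<in> S"
  by (metis length_sorted_list_of_set nth_mem set_sorted_list_of_set)

lemma SL_strict: "finite S \<Longrightarrow> i < j \<Longrightarrow> j < card S \<Longrightarrow> sorted_list_of_set S ! i < sorted_list_of_set S ! j"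
  by (metis length_sorted_list_of_set sorted_wrt_nth_less strict_sorted_list_of_set)

lemma SL_mono: "finite S \<Longrightarrow> i \<le> j \<Longrightarrow> j < card S \<Longrightarrow> sorted_list_of_set S ! i \<le> sorted_list_of_set S ! j"
  by (metis SL_strict le_neq_implies_less order.order_iff_strict)

lemma SL_index: "finite S \<Longrightarrow> a \<in> S \<Longrightarrow> \<exists>j<card S. sorted_list_of_set S ! j = a"
  by (metis in_set_conv_nth length_sorted_list_of_set set_sorted_list_of_set)

lemma SL_less_index: "finite S \<Longrightarrow> j < card S \<Longrightarrow> p < card S \<Longrightarrow>
   sorted_list_of_set S ! p < sorted_list_of_set S ! j \<Longrightarrow> p < j"
  by (meson SL_mono not_le)

lemma SL_le_of_count:
  assumes "finite A" "1 \<le> i" "i \<le> card A" "F \<subseteq> {a\<in>A. a \<le> (y::nat)}" "i \<le> card F"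
  shows "sorted_list_of_set A ! (i-1) \<le> y"
proof (rule ccontr)
  assume "\<not> ?thesis"
  hence "F \<subseteq> (!) (sorted_list_of_set A) ` {0..<i-1}"
  proof -
    { fix a assume "a \<in> F"
      hence a: "a \<in> A" "a \<le> y" using assms(4) by auto
      obtain p where p: "p < card A" "sorted_list_of_set A ! p = a" using SL_index[OF assms(1) a(1)] by blast
      have "p < i - 1" using SL_less_index[OF assms(1), of "i-1" p] p a \<open>\<not> _\<close> assms by auto
      hence "a \<in> (!) (sorted_list_of_set A) ` {0..<i-1}" using p by auto }
    thus ?thesis by blast
  qed
  hence "card F \<le> card {0..<i-1}" by (meson card_image_le card_mono finite_atLeastLessThan finite_imageI le_trans)
  thus False using assms by simp
qed

lemma SL_count:
  assumes "finite B" "1 \<le> k" "k \<le> card B"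
  shows "card ((!) (sorted_list_of_set B) ` {0..<k}) = k"
    "(!) (sorted_list_of_set B) ` {0..<k} \<subseteq> {b\<in>B. b \<le> sorted_list_of_set B ! (k-1)}"
proof -
  have "inj_on ((!) (sorted_list_of_set B)) {0..<k}"
    using assms by (auto simp: inj_on_def nth_eq_iff_index_eq)
  thus "card ((!) (sorted_list_of_set B) ` {0..<k}) = k" by (simp add: card_image)
  show "(!) (sorted_list_of_set B) ` {0..<k} \<subseteq> {b\<in>B. b \<le> sorted_list_of_set B ! (k-1)}"
    using assms SL_nth_in SL_mono by fastforce
qed

lemma ewis_eq: "ewis xs = ewis_from 0 xs"
  by (cases xs) auto

lemma ewis_from_subset: "set (ewis_from cur xs) \<subseteq> set xs"
  by (induction xs arbitrary: cur) auto

lemma ewis_from_mem_intro: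
  "cur \<le> snd x \<Longrightarrow> \<forall>y\<in>set ys. snd y \<le> snd x \<Longrightarrow> x \<in> set (ewis_from cur (ys @ x # zs))"
  by (induction ys arbitrary: cur) auto

lemma ewis_from_mem_dest:
  "distinct (map fst (ys @ x # zs)) \<Longrightarrow> x \<in> set (ewis_from cur (ys @ x # zs)) \<Longrightarrow>
   cur \<le> snd x \<and> (\<forall>y\<in>set ys. snd y \<le> snd x)"
proof (induction ys arbitrary: cur)
  case Nil
  then show ?case using ewis_from_subset[of cur zs] by (auto split: if_splits)
next
  case (Cons a ys)
  show ?case
  proof (cases "cur \<le> snd a")
    case True
    hence "x \<in> set (ewis_from (snd a) (ys @ x # zs))" using Cons.prems by auto
    thus ?thesis using Cons True by fastforce
  next
    case False
    hence "x \<in> set (ewis_from cur (ys @ x # zs))" using Cons.prems by auto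
    thus ?thesis using Cons False by fastforce
  qed
qed

lemma ewis_from_Nil: "ewis_from cur xs = [] \<longleftrightarrow> (\<forall>y\<in>set xs. snd y < cur)"
  by (induction xs arbitrary: cur) auto

lemma ewis_from_last:
  "ewis_from cur xs \<noteq> [] \<Longrightarrow> snd (last (ewis_from cur xs)) = Max (insert cur (snd ` set xs))"
proof (induction xs arbitrary: cur)
  case Nil thus ?case by simp
next
  case (Cons a xs)
  show ?case
  proof (cases "cur \<le> snd a")
    case True
    show ?thesis
    proof (cases "ewis_from (snd a) xs = []")
      case e: True
      hence "\<forall>y\<in>set xs. snd y < snd a" by (simp add: ewis_from_Nil)
      have "Max (insert cur (snd ` set (a#xs))) = snd a"
        using True \<open>\<forall>y\<in>set xs. snd y < snd a\<close> by (intro Max_eqI) auto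
      thus ?thesis using True e by simp
    next
      case e: False
      have "snd (last (ewis_from cur (a # xs))) = snd (last (ewis_from (snd a) xs))"
        using True e by simp
      also have "\<dots> = Max (insert (snd a) (snd ` set xs))" using Cons.IH[OF e] .
      also have "\<dots> = Max (insert cur (snd ` set (a#xs)))"
        using True by (simp add: insert_commute max_def) (meson Max_ge finite_imageI finite_insert finite_set insertI1 le_trans)
      finally show ?thesis .
    qed
  next
    case False
    hence ne: "ewis_from cur xs \<noteq> []" using Cons.prems by simp
    have "snd (last (ewis_from cur (a # xs))) = Max (insert cur (snd ` set xs))"
      using False Cons.IH[OF ne] by simp
    also have "\<dots> = Max (insert cur (snd ` set (a#xs)))"
    proof (rule antisym)
      show "Max (insert cur (snd ` set xs)) \<le> Max (insert cur (snd ` set (a#xs)))"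
        by (rule Max_mono) auto
      show "Max (insert cur (snd ` set (a#xs))) \<le> Max (insert cur (snd ` set xs))"
      proof -
        have "snd a \<le> Max (insert cur (snd ` set xs))"
          using False by (meson Max_ge finite_imageI finite_insert finite_set insertI1 le_trans nle_le)
        thus ?thesis by (simp add: Max_le_iff)
      qed
    qed
    finally show ?thesis .
  qed
qed

lemma ewis_last:
  assumes "xs \<noteq> []"
  shows "last (ewis xs) \<in> set xs" "\<forall>y\<in>set xs. snd y \<le> snd (last (ewis xs))"
    "snd (hd xs) \<le> snd (last (ewis xs))"
proof -
  have ne: "ewis xs \<noteq> []" using assms by (cases xs) auto
  have "last (ewis xs) \<in> set (ewis xs)" using ne by simp
  thus "last (ewis xs) \<in> set xs" using ewis_from_subset[of 0 xs] ewis_eq[of xs] by auto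
  have m: "snd (last (ewis xs)) = Max (insert 0 (snd ` set xs))"
    using ewis_from_last[of 0 xs] ne ewis_eq by metis
  show "\<forall>y\<in>set xs. snd y \<le> snd (last (ewis xs))" unfolding m by simp
  thus "snd (hd xs) \<le> snd (last (ewis xs))" using assms by simp
qed

lemma ewis_not_mem:
  assumes "distinct (map fst xs)" "x \<in> set xs" "x \<notin> set (ewis xs)"
  shows "snd x < snd (last (ewis xs))"
proof -
  obtain ys zs where xs: "xs = ys @ x # zs" using assms(2) by (meson split_list)
  have "\<not> (\<forall>y\<in>set ys. snd y \<le> snd x)"
    using ewis_from_mem_intro[of 0 x ys zs] assms(3) xs ewis_eq[of xs] by auto
  then obtain y where "y \<in> set ys" "snd x < snd y" by auto
  moreover have "snd y \<le> snd (last (ewis xs))" using ewis_last(2)[of xs] xs \<open>y \<in> set ys\<close> by auto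
  ultimately show ?thesis by simp
qed




lemma zeta_mono: "c \<le> d \<Longrightarrow> zeta n lam d \<le> zeta n lam c"
  unfolding zeta_def by (rule card_mono) auto

lemma zeta_le_n: "zeta n lam c \<le> n"
proof -
  have "card {i \<in> {1..n}. c \<le> lam i} \<le> card {1..n}" by (rule card_mono) auto
  thus ?thesis unfolding zeta_def by simp
qed

lemma set_scan_seq: "set (scan_seq n lam T l m) = (\<lambda>c. (c, T c (m c))) ` {c. l \<le> c \<and> c \<le> lam 1 \<and> 0 < m c}"
  unfolding scan_seq_def by auto


lemma distinct_scan_seq: "distinct (map fst (scan_seq n lam T l m))"
  unfolding scan_seq_def by (simp add: comp_def)

lemma scan_seq_hd: "l \<le> lam 1 \<Longrightarrow> 0 < m l \<Longrightarrow>
   scan_seq n lam T l m = (l, T l (m l)) # scan_seq n lam T (Suc l) m"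
proof -
  assume a: "l \<le> lam 1" "0 < m l"
  have "[l..<lam 1 + 1] = l # [Suc l..<lam 1 + 1]" using a(1) upt_conv_Cons[of l "lam 1 + 1"] by simp
  thus ?thesis unfolding scan_seq_def using a(2) by simp
qed

lemma scan_seq_adj:
  assumes "l \<le> c" "Suc c \<le> lam 1" "0 < m c" "0 < m (Suc c)"
  shows "\<exists>ys zs. scan_seq n lam T l m = ys @ (c, T c (m c)) # (Suc c, T (Suc c) (m (Suc c))) # zs"
proof -
  have e1: "[l..<lam 1 + 1] = [l..<c] @ [c..<lam 1 + 1]" using assms upt_add_eq_append[of l c "lam 1 + 1 - c"] by simp
  have e2: "[c..<lam 1 + 1] = c # Suc c # [Suc (Suc c)..<lam 1 + 1]" using assms by (simp add: upt_conv_Cons)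
  let ?f = "\<lambda>c. (c, T c (m c))" and ?P = "\<lambda>c. 0 < m c"
  have "scan_seq n lam T l m = map ?f (filter ?P [l..<c]) @ ?f c # ?f (Suc c) # map ?f (filter ?P [Suc (Suc c)..<lam 1 + 1])"
    unfolding scan_seq_def e1 e2 using assms by simp
  thus ?thesis by blast
qed

definition inv :: "nat \<Rightarrow> (nat \<Rightarrow> nat) \<Rightarrow> nat \<Rightarrow> nat \<Rightarrow> (nat \<Rightarrow> nat) \<Rightarrow> bool" where
  "inv n lam l t m \<longleftrightarrow> m l = zeta n lam l - t \<and> (\<forall>c. l \<le> c \<and> c \<le> lam 1 \<longrightarrow> m c \<le> zeta n lam c)
     \<and> (\<forall>c. l \<le> c \<and> c < lam 1 \<longrightarrow> m (Suc c) \<le> m c)"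

lemma inv_le_l:
  assumes "inv n lam l t m" "l \<le> c" "c \<le> lam 1"
  shows "m c \<le> m l"
  using assms(2,3)
proof (induction c rule: dec_induct)
  case base thus ?case by simp
next
  case (step c)
  thus ?case using assms(1) unfolding inv_def by (meson Suc_le_lessD le_trans less_imp_le_nat)
qed

lemma tab_col: "tableau n lam T \<Longrightarrow> in_shape n lam c j \<Longrightarrow> in_shape n lam c j' \<Longrightarrow> j < j' \<Longrightarrow> T c j < T c j'"
proof (induction j' rule: less_induct)
  case (less j')
  show ?case
  proof (cases "j = j' - 1")
    case True
    thus ?thesis using less.prems unfolding tableau_def
      by (metis Suc_diff_1 Suc_eq_plus1 gr_implies_not0 not_gr0)
  next
    case False
    have "in_shape n lam c (j' - 1)" using less.prems unfolding in_shape_def by auto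
    hence "T c j < T c (j' - 1)" using less.IH[of "j'-1"] less.prems False by auto
    moreover have "T c (j'-1) < T c j'" using less.prems \<open>in_shape n lam c (j' - 1)\<close> unfolding tableau_def
      by (metis Suc_diff_1 Suc_eq_plus1 gr_implies_not0 less.prems(4) not_gr0)
    ultimately show ?thesis by simp
  qed
qed

lemma inv_step:
  assumes tab: "tableau n lam T" and l: "1 \<le> l" "l \<le> lam 1" and I: "inv n lam l t m"
    and t: "t < zeta n lam l"
  shows "inv n lam l (Suc t) (scan_step n lam T l m)"
proof -
  let ?s = "scan_seq n lam T l m"
  let ?E = "ewis ?s"
  have ml: "0 < m l" using I t unfolding inv_def by auto
  have sh: "?s = (l, T l (m l)) # scan_seq n lam T (Suc l) m" using scan_seq_hd[of l lam m n T] l(2) ml by simp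
  have lE: "l \<in> fst ` set ?E" by (subst sh) simp
  have Esub: "set ?E \<subseteq> set ?s" using ewis_from_subset[of 0 ?s] ewis_eq[of ?s] by auto
  have st: "scan_step n lam T l m = (\<lambda>c. if c \<in> fst ` set ?E then m c - 1 else m c)"
    unfolding scan_step_def by simp
  have memE: "(c, T c (m c)) \<in> set ?E" if cin: "c \<in> fst ` set ?E" for c
  proof -
    obtain v where "(c, v) \<in> set ?E" using cin by force
    hence "(c, v) \<in> set ?s" using Esub by auto
    hence "v = T c (m c)" by (auto simp: set_scan_seq)
    thus ?thesis using \<open>(c, v) \<in> set ?E\<close> by simp
  qed
  show ?thesis unfolding inv_def st
  proof (intro conjI allI impI)
    show "(if l \<in> fst ` set ?E then m l - 1 else m l) = zeta n lam l - Suc t"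
      using lE I unfolding inv_def by simp
  next
    fix c assume "l \<le> c \<and> c \<le> lam 1"
    thus "(if c \<in> fst ` set ?E then m c - 1 else m c) \<le> zeta n lam c"
      using I unfolding inv_def by auto
  next
    fix c assume c: "l \<le> c \<and> c < lam 1"
    have mono: "m (Suc c) \<le> m c" using I c unfolding inv_def by auto
    show "(if Suc c \<in> fst ` set ?E then m (Suc c) - 1 else m (Suc c))
          \<le> (if c \<in> fst ` set ?E then m c - 1 else m c)"
    proof (cases "m (Suc c) < m c \<or> m c = 0 \<or> c \<notin> fst ` set ?E")
      case True thus ?thesis using mono by auto
    next
      case False
      hence eq: "m (Suc c) = m c" and pos: "0 < m c" and cE: "c \<in> fst ` set ?E" using mono by auto
      obtain ys zs where dec: "?s = ys @ (c, T c (m c)) # (Suc c, T (Suc c) (m (Suc c))) # zs"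
        using scan_seq_adj[of l c lam m n T] c pos eq by auto
      have "(c, T c (m c)) \<in> set (ewis_from 0 ?s)" using memE[OF cE] ewis_eq by metis
      hence pre: "\<forall>y\<in>set ys. snd y \<le> T c (m c)"
        using ewis_from_mem_dest[of ys "(c, T c (m c))" "(Suc c, T (Suc c) (m (Suc c))) # zs" 0]
          distinct_scan_seq[of n lam T l m] dec by auto
      have inc: "in_shape n lam c (m c)" "in_shape n lam (Suc c) (m c)"
      proof -
        have "m c \<le> zeta n lam c" "m (Suc c) \<le> zeta n lam (Suc c)" using I c unfolding inv_def by auto
        thus "in_shape n lam c (m c)" "in_shape n lam (Suc c) (m c)"
          using c pos eq l unfolding in_shape_def by auto
      qed
      have "T c (m c) \<le> T (Suc c) (m (Suc c))"
        using tab inc eq unfolding tableau_def by simp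
      hence "(Suc c, T (Suc c) (m (Suc c))) \<in> set (ewis_from 0 ((ys @ [(c, T c (m c))]) @ (Suc c, T (Suc c) (m (Suc c))) # zs))"
        using pre by (intro ewis_from_mem_intro) auto
      hence "Suc c \<in> fst ` set ?E" using dec ewis_eq[of ?s] by force
      thus ?thesis using eq cE by simp
    qed
  qed
qed

lemma scan_state_Suc: "scan_state n lam T l (Suc t) = scan_step n lam T l (scan_state n lam T l t)"
  unfolding scan_state_def by simp

lemma inv_state:
  assumes tab: "tableau n lam T" and l: "1 \<le> l" "l \<le> lam 1" and t: "t \<le> zeta n lam l"
  shows "inv n lam l t (scan_state n lam T l t)"
  using t
proof (induction t)
  case 0
  show ?case unfolding inv_def scan_state_def using zeta_mono l
    by (auto simp: Suc_le_eq)
next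
  case (Suc t)
  thus ?case using inv_step[OF tab l] scan_state_Suc by (metis Suc_leD Suc_le_lessD)
qed


definition X :: "nat \<Rightarrow> (nat \<Rightarrow> nat) \<Rightarrow> (nat \<Rightarrow> nat \<Rightarrow> nat) \<Rightarrow> nat \<Rightarrow> nat \<Rightarrow> nat" where
  "X n lam T l t = snd (last (ewis (scan_seq n lam T l (scan_state n lam T l t))))"

lemma scan_props:
  assumes tab: "tableau n lam T" and l: "1 \<le> l" "l \<le> lam 1" and t: "t < zeta n lam l"
  shows "T l (zeta n lam l - t) \<le> X n lam T l t"
    "\<exists>c i. l \<le> c \<and> c \<le> lam 1 \<and> 1 \<le> i \<and> i \<le> zeta n lam l - t \<and> i \<le> zeta n lam c \<and> X n lam T l t = T c i"
    "Suc t < zeta n lam l \<Longrightarrow> X n lam T l (Suc t) < X n lam T l t"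
proof -
  let ?m = "scan_state n lam T l t"
  let ?s = "scan_seq n lam T l ?m"
  have I: "inv n lam l t ?m" using inv_state[OF tab l] t by simp
  have ml: "?m l = zeta n lam l - t" "0 < ?m l" using I t unfolding inv_def by auto
  have sh: "?s = (l, T l (?m l)) # scan_seq n lam T (Suc l) ?m" using scan_seq_hd[of l lam ?m n T] l(2) ml by simp
  have ne: "?s \<noteq> []" using sh by simp
  show "T l (zeta n lam l - t) \<le> X n lam T l t"
    using ewis_last(3)[OF ne] sh ml unfolding X_def by simp
  obtain c v where cv: "last (ewis ?s) = (c, v)" by (cases "last (ewis ?s)")
  have "(c, v) \<in> set ?s" using ewis_last(1)[OF ne] cv by simp
  hence c: "l \<le> c" "c \<le> lam 1" "0 < ?m c" "v = T c (?m c)" by (auto simp: set_scan_seq)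
  have "?m c \<le> ?m l" using inv_le_l[OF I c(1,2)] .
  moreover have "?m c \<le> zeta n lam c" using I c unfolding inv_def by auto
  ultimately show "\<exists>c i. l \<le> c \<and> c \<le> lam 1 \<and> 1 \<le> i \<and> i \<le> zeta n lam l - t \<and> i \<le> zeta n lam c \<and> X n lam T l t = T c i"
    using c cv ml unfolding X_def by (intro exI[of _ c] exI[of _ "?m c"]) auto
  assume st: "Suc t < zeta n lam l"
  let ?E = "ewis ?s"
  let ?m' = "scan_state n lam T l (Suc t)"
  have m': "?m' = (\<lambda>c. if c \<in> fst ` set ?E then ?m c - 1 else ?m c)"
    unfolding scan_state_Suc scan_step_def by simp
  have I': "inv n lam l (Suc t) ?m'" using inv_state[OF tab l] st by simp
  have ml': "0 < ?m' l" using I' st unfolding inv_def by auto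
  have ne': "scan_seq n lam T l ?m' \<noteq> []" using scan_seq_hd[of l lam ?m' n T] l(2) ml' by simp
  have all: "snd y < X n lam T l t" if y: "y \<in> set (scan_seq n lam T l ?m')" for y
  proof -
    obtain d where d: "l \<le> d" "d \<le> lam 1" "0 < ?m' d" "y = (d, T d (?m' d))" using y by (auto simp: set_scan_seq)
    have dz: "?m d \<le> zeta n lam d" using I d unfolding inv_def by auto
    have din: "(d, T d (?m d)) \<in> set ?s" using d m' by (auto simp: set_scan_seq split: if_splits)
    have le: "T d (?m d) \<le> X n lam T l t" using ewis_last(2)[OF ne] din unfolding X_def by auto
    show ?thesis
    proof (cases "d \<in> fst ` set ?E")
      case True
      hence "?m' d = ?m d - 1" using m' by simp
      hence "T d (?m' d) < T d (?m d)"
        using d dz l by (intro tab_col[OF tab]) (auto simp: in_shape_def)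
      thus ?thesis using le d by simp
    next
      case False
      hence "(d, T d (?m d)) \<notin> set ?E" by force
      hence "T d (?m d) < X n lam T l t"
        using ewis_not_mem[OF distinct_scan_seq din] unfolding X_def by simp
      thus ?thesis using False d m' by simp
    qed
  qed
  show "X n lam T l (Suc t) < X n lam T l t"
    using all[OF ewis_last(1)[OF ne']] unfolding X_def by simp
qed

lemma scanning_X: "in_shape n lam l k \<Longrightarrow> scanning n lam T l k = X n lam T l (zeta n lam l - k)"
  unfolding scanning_def X_def by simp




lemma finite_Rset: "finite (Rset n lam)"
proof -
  have "Rset n lam \<subseteq> zeta n lam ` {1..lam 1}" unfolding Rset_def by auto
  thus ?thesis using finite_subset by blast
qed

lemma bridge_312:
  assumes nc: "\<not> R_312_containing n lam \<pi>"
    and zc: "zc \<in> Rset n lam" and zl: "zl \<in> Rset n lam"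
    and p: "1 \<le> p" "p \<le> zc" and q: "zc < q" "q \<le> zl" and q': "zl < q'" "q' \<le> n"
    and v: "\<pi> q < \<pi> q'" "\<pi> q' < \<pi> p"
  shows False
proof -
  let ?R = "Rset n lam"
  let ?s = "sorted_list_of_set ?R"
  let ?r = "card ?R"
  have fin: "finite ?R" by (rule finite_Rset)
  obtain i0 where i0: "i0 < ?r" "?s ! i0 = zc" using SL_index[OF fin zc] by blast
  obtain i1 where i1: "i1 < ?r" "?s ! i1 = zl" using SL_index[OF fin zl] by blast
  have "i0 < i1" using SL_less_index[OF fin i1(1) i0(1)] i0 i1 q by simp
  define J where "J = {j. i0 \<le> j \<and> j < i1 \<and> ?s ! j < q}"
  have i0J: "i0 \<in> J" unfolding J_def using \<open>i0 < i1\<close> i0 q by simp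
  have finJ: "finite J" unfolding J_def by auto
  define j where "j = Max J"
  have jJ: "j \<in> J" unfolding j_def using Max_in[OF finJ] i0J by blast
  hence j: "i0 \<le> j" "j < i1" "?s ! j < q" unfolding J_def by auto
  have sj1: "q \<le> ?s ! Suc j"
  proof (cases "Suc j < i1")
    case True
    show ?thesis
    proof (rule ccontr)
      assume "\<not> ?thesis"
      hence "Suc j \<in> J" unfolding J_def using True j by simp
      hence "Suc j \<le> j" unfolding j_def using Max_ge[OF finJ] by blast
      thus False by simp
    qed
  next
    case False
    hence "Suc j = i1" using j by simp
    thus ?thesis using i1 q by simp
  qed
  have qqh: "qq n lam (Suc j) = ?s ! j" unfolding qq_def using j i1 by simp
  have qqh1: "qq n lam (Suc j + 1) = ?s ! Suc j" unfolding qq_def using j i1 by simp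
  have "p \<le> ?s ! j" using p i0 SL_mono[OF fin j(1)] j i1 by fastforce
  moreover have "?s ! Suc j < q'" using SL_mono[OF fin, of "Suc j" i1] j i1 q' by simp
  moreover have "Suc j \<le> ?r - 1" using j i1 by simp
  ultimately have "R_312_containing n lam \<pi>"
    unfolding R_312_containing_def
    using p j sj1 q' v qqh qqh1 by (intro exI[of _ "Suc j"] exI[of _ p] exI[of _ q] exI[of _ q']) auto
  thus False using nc by simp
qed

lemma card_col:
  assumes bij: "bij_betw \<pi> {1..n} {1..n}"
  shows "card (\<pi> ` {1..zeta n lam c}) = zeta n lam c"
proof -
  have "inj_on \<pi> {1..zeta n lam c}"
    using bij_betw_imp_inj_on[OF bij] zeta_le_n[of n lam c] inj_on_subset[of \<pi> "{1..n}" "{1..zeta n lam c}"] by auto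
  thus ?thesis by (simp add: card_image)
qed

lemma key_eq: "in_shape n lam c i \<Longrightarrow> key n lam \<pi> c i = sorted_list_of_set (\<pi> ` {1..zeta n lam c}) ! (i - 1)"
  unfolding key_def by simp

lemma core:
  assumes bij: "bij_betw \<pi> {1..n} {1..n}" and nc: "\<not> R_312_containing n lam \<pi>"
    and lc: "1 \<le> l" "l \<le> c" "c \<le> lam 1" and ik: "1 \<le> i" "i \<le> k" "k \<le> zeta n lam l" "i \<le> zeta n lam c"
    and x: "x \<in> {1..n}" "x \<le> key n lam \<pi> c i" "x \<notin> \<pi> ` {1..zeta n lam l}"
  shows "x \<le> key n lam \<pi> l k"
proof (rule ccontr)
  assume "\<not> ?thesis"
  let ?zc = "zeta n lam c" and ?zl = "zeta n lam l"
  let ?A = "\<pi> ` {1..?zc}" and ?B = "\<pi> ` {1..?zl}"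
  let ?sA = "sorted_list_of_set ?A" and ?sB = "sorted_list_of_set ?B"
  have zcl: "?zc \<le> ?zl" using zeta_mono lc by blast
  have AB: "?A \<subseteq> ?B" using zcl by auto
  have cA: "card ?A = ?zc" and cB: "card ?B = ?zl" using card_col[OF bij] by auto
  have ish: "in_shape n lam c i" "in_shape n lam l k" using lc ik unfolding in_shape_def by auto
  have y: "key n lam \<pi> l k = ?sB ! (k-1)" using key_eq[OF ish(2)] .
  have a: "key n lam \<pi> c i = ?sA ! (i-1)" using key_eq[OF ish(1)] .
  have aA: "?sA ! (i-1) \<in> ?A" using SL_nth_in[of ?A "i-1"] cA ik by simp
  then obtain p where p: "p \<in> {1..?zc}" "\<pi> p = ?sA ! (i-1)" by auto
  have xa: "x < \<pi> p" using x(2,3) a p aA AB by (metis image_eqI le_neq_implies_less subsetD)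
  obtain q' where q': "q' \<in> {1..n}" "\<pi> q' = x" using bij x(1) by (metis bij_betw_def imageE)
  have q'l: "?zl < q'" using q' x(3) by (metis atLeastAtMost_iff image_eqI not_le)
  have zrc: "?zc \<in> Rset n lam" "?zl \<in> Rset n lam"
    unfolding Rset_def using lc q'l q' zcl by auto
  let ?F = "(!) ?sB ` {0..<k}"
  have F: "card ?F = k" "?F \<subseteq> {b\<in>?B. b \<le> ?sB ! (k-1)}" using SL_count[of ?B k] cB ik by auto
  have "?F \<subseteq> {a\<in>?A. a \<le> ?sB ! (k-1)}"
  proof
    fix b assume bF: "b \<in> ?F"
    hence b: "b \<in> ?B" "b \<le> ?sB ! (k-1)" using F by auto
    have "b \<in> ?A"
    proof (rule ccontr)
      assume "b \<notin> ?A"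
      obtain q where q: "q \<in> {1..?zl}" "\<pi> q = b" using b by auto
      have "?zc < q" using q \<open>b \<notin> ?A\<close> by (metis atLeastAtMost_iff image_eqI not_le)
      show False
        using bridge_312[OF nc zrc, of p q q'] p q q' q'l \<open>?zc < q\<close> xa b \<open>\<not> x \<le> key n lam \<pi> l k\<close> y
        by auto
    qed
    thus "b \<in> {a\<in>?A. a \<le> ?sB ! (k-1)}" using b by simp
  qed
  hence "?sA ! (i-1) \<le> ?sB ! (k-1)"
    using SL_le_of_count[of ?A i ?F "?sB ! (k-1)"] cA ik F by auto
  thus False using \<open>\<not> x \<le> key n lam \<pi> l k\<close> x(2) a y by simp
qed




lemma bound_step:
  assumes bij: "bij_betw \<pi> {1..n} {1..n}" and nc: "\<not> R_312_containing n lam \<pi>"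
    and tab: "tableau n lam T" and le: "tab_le n lam T (key n lam \<pi>)"
    and l: "1 \<le> l" "l \<le> lam 1"
    and t: "t < zeta n lam l"
    and hyp: "t = 0 \<or> (\<exists>t'. t = Suc t' \<and> X n lam T l t' \<le> key n lam \<pi> l (zeta n lam l - t'))"
  shows "X n lam T l t \<le> key n lam \<pi> l (zeta n lam l - t)"
proof -
  let ?zl = "zeta n lam l"
  let ?B = "\<pi> ` {1..?zl}" and ?sB = "sorted_list_of_set (\<pi> ` {1..zeta n lam l})"
  have finB: "finite ?B" by simp
  have cB: "card ?B = ?zl" using card_col[OF bij] by auto
  obtain c i where ci: "l \<le> c" "c \<le> lam 1" "1 \<le> i" "i \<le> ?zl - t" "i \<le> zeta n lam c" "X n lam T l t = T c i"
    using scan_props(2)[OF tab l t] by blast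
  have ish: "in_shape n lam c i" using ci l unfolding in_shape_def by auto
  have xk: "T c i \<le> key n lam \<pi> c i" using le ish unfolding tab_le_def by auto
  have xn: "T c i \<in> {1..n}" using tab ish unfolding tableau_def by auto
  have ishl: "in_shape n lam l (?zl - t)" using t l unfolding in_shape_def by auto
  have y: "key n lam \<pi> l (?zl - t) = ?sB ! (?zl - t - 1)" using key_eq[OF ishl] .
  have coreapp: "T c i \<notin> ?B \<Longrightarrow> T c i \<le> key n lam \<pi> l (?zl - t)"
    using core[OF bij nc l(1) ci(1,2) ci(3,4) _ ci(5) xn xk] t by auto
  note res = this
  {
    assume "t = 0"
    have zc: "zeta n lam c \<le> ?zl" using zeta_mono ci by blast
    have "key n lam \<pi> c i \<in> ?B"
      using key_eq[OF ish] SL_nth_in[of "\<pi> ` {1..zeta n lam c}" "i-1"] card_col[OF bij] ci zc by fastforce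
    then obtain j where j: "j < ?zl" "?sB ! j = key n lam \<pi> c i" using SL_index[OF finB] cB by metis
    have "?sB ! j \<le> ?sB ! (?zl - 1)" using SL_mono[OF finB, of j "?zl - 1"] j cB by simp
    hence "X n lam T l 0 \<le> key n lam \<pi> l (?zl - 0)" using y \<open>t = 0\<close> j xk ci by simp
  } note base = this
  {
    fix t' assume tt: "t = Suc t'" and IH: "X n lam T l t' \<le> key n lam \<pi> l (?zl - t')"
    have lt: "X n lam T l t < X n lam T l t'" using scan_props(3)[OF tab l, of t'] tt t by simp
    have ishl': "in_shape n lam l (?zl - t')" using t l tt unfolding in_shape_def by auto
    have y': "key n lam \<pi> l (?zl - t') = ?sB ! (?zl - t - 1 + 1)"
      using key_eq[OF ishl'] tt t by (simp add: Suc_diff_Suc)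
    have "T c i \<le> key n lam \<pi> l (?zl - t)"
    proof (rule ccontr)
      assume nle: "\<not> ?thesis"
      have "T c i \<notin> ?B"
      proof
        assume "T c i \<in> ?B"
        then obtain j where j: "j < ?zl" "?sB ! j = T c i" using SL_index[OF finB] cB by metis
        have "?zl - t - 1 < j" using SL_less_index[OF finB, of j "?zl - t - 1"] j cB nle y t by simp
        hence "?sB ! (?zl - t - 1 + 1) \<le> ?sB ! j" using SL_mono[OF finB, of "?zl - t - 1 + 1" j] j cB by simp
        thus False using lt IH y' j ci by simp
      qed
      thus False using coreapp nle by simp
    qed
    hence "X n lam T l t \<le> key n lam \<pi> l (?zl - t)" using ci by simp
  } note step = this
  show "X n lam T l t \<le> key n lam \<pi> l (?zl - t)" using hyp base step by auto
qed

lemma main_bound: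
  assumes bij: "bij_betw \<pi> {1..n} {1..n}" and nc: "\<not> R_312_containing n lam \<pi>"
    and tab: "tableau n lam T" and le: "tab_le n lam T (key n lam \<pi>)"
    and l: "1 \<le> l" "l \<le> lam 1"
  shows "t < zeta n lam l \<Longrightarrow> X n lam T l t \<le> key n lam \<pi> l (zeta n lam l - t)"
proof (induction t)
  case 0 thus ?case using bound_step[OF bij nc tab le l] by blast
next
  case (Suc t) thus ?case using bound_step[OF bij nc tab le l, of "Suc t"] by simp
qed

theorem theorem6p3:
  fixes n :: nat and lam \<pi> :: "nat \<Rightarrow> nat"
  assumes "1 \<le> n"
    and "partition n lam"
    and "R_perm n lam \<pi>"
    and "\<not> R_312_containing n lam \<pi>"
  shows "Demazure n lam \<pi> = {T \<in> Tabs n lam. tab_le n lam T (key n lam \<pi>)}"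
proof -
  have bij: "bij_betw \<pi> {1..n} {1..n}" using assms(3) unfolding R_perm_def by simp
  have ge: "T l k \<le> scanning n lam T l k" if tab: "tableau n lam T" and ish: "in_shape n lam l k" for T l k
  proof -
    have l: "1 \<le> l" "l \<le> lam 1" and k: "1 \<le> k" "k \<le> zeta n lam l" using ish unfolding in_shape_def by auto
    have "T l (zeta n lam l - (zeta n lam l - k)) \<le> X n lam T l (zeta n lam l - k)"
      using scan_props(1)[OF tab l, of "zeta n lam l - k"] k by simp
    thus ?thesis using scanning_X[OF ish] k by simp
  qed
  show ?thesis
  proof (intro set_eqI iffI)
    fix T assume "T \<in> Demazure n lam \<pi>"
    hence T: "tableau n lam T" "tab_le n lam (scanning n lam T) (key n lam \<pi>)"
      unfolding Demazure_def Tabs_def by auto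
    have "tab_le n lam T (key n lam \<pi>)"
      unfolding tab_le_def using T ge unfolding tab_le_def by (meson le_trans)
    thus "T \<in> {T \<in> Tabs n lam. tab_le n lam T (key n lam \<pi>)}" using T unfolding Tabs_def by simp
  next
    fix T assume "T \<in> {T \<in> Tabs n lam. tab_le n lam T (key n lam \<pi>)}"
    hence T: "tableau n lam T" "tab_le n lam T (key n lam \<pi>)" unfolding Tabs_def by auto
    have "tab_le n lam (scanning n lam T) (key n lam \<pi>)"
      unfolding tab_le_def
    proof (intro allI impI)
      fix l k assume ish: "in_shape n lam l k"
      have l: "1 \<le> l" "l \<le> lam 1" and k: "1 \<le> k" "k \<le> zeta n lam l" using ish unfolding in_shape_def by auto
      have "X n lam T l (zeta n lam l - k) \<le> key n lam \<pi> l (zeta n lam l - (zeta n lam l - k))"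
        using main_bound[OF bij assms(4) T l, of "zeta n lam l - k"] k by simp
      thus "scanning n lam T l k \<le> key n lam \<pi> l k" using scanning_X[OF ish] k by simp
    qed
    thus "T \<in> Demazure n lam \<pi>" using T unfolding Demazure_def Tabs_def by simp
  qed
qed


end
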